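(* For each $k\in\mathbb N$ there exists $C_k\in[0,\infty)$ such that $\mathbb E(N_t^k)\le C_k t^{-k}$ for all $0<t\le 1$.
   Context: Kakutani's interval-splitting process: let $U_1,U_2,\dots$ be i.i.d. uniform random variables on $[0,1]$. At time $0$ the partition of $[0,1]$ consists of the single interval $[0,1]$. Given the partition at time $n\in\mathbb Z_+$ (which consists of $n+1$ intervals, whose lengths are a.s. distinct), let $[a,b]$ be the interval of maximal length; the partition at time $n+1$ is obtained by replacing $[a,b]$ by the two intervals $[a,a+U_{n+1}(b-a)]$ and $[a+U_{n+1}(b-a),b]$. $M_n$ is the maximal interval length at time $n$, and $N_t:=\inf\{n\in\mathbb Z_+:M_n\le t\}$ for $t>0$. *)

theory Defs
  imports "HOL-Probability.Probability"
begin

text \<open>Intervals [a,b] are represented by pairs (a,b); the length of (a,b) is b - a.\<close>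
definition ivl_len :: "real \<times> real \<Rightarrow> real" where
  "ivl_len p = snd p - fst p"

text \<open>The partition at time n of Kakutani's process driven by the sequence u
  (u (n+1) is the uniform variable used in step n+1; u 0 is unused).
  The interval of maximal length is chosen by Hilbert choice (it is a.s. unique).\<close>
fun kakutani_partition :: "(nat \<Rightarrow> real) \<Rightarrow> nat \<Rightarrow> (real \<times> real) set" where
  "kakutani_partition u 0 = {(0, 1)}"
| "kakutani_partition u (Suc n) =
     (let P = kakutani_partition u n;
          p = (SOME p. p \<in> P \<and> (\<forall>q\<in>P. ivl_len q \<le> ivl_len p));
          a = fst p; b = snd p;
          c = a + u (Suc n) * (b - a)
      in (P - {p}) \<union> {(a, c), (c, b)})"

definition kakutani_max :: "(nat \<Rightarrow> real) \<Rightarrow> nat \<Rightarrow> real" where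
  "kakutani_max u n = Max (ivl_len ` kakutani_partition u n)"

definition kakutani_N :: "(nat \<Rightarrow> real) \<Rightarrow> real \<Rightarrow> enat" where
  "kakutani_N u t = (INF n\<in>{n. kakutani_max u n \<le> t}. enat n)"

end

theory Submission
  imports Defs
begin



definition kphi :: "real \<Rightarrow> real \<Rightarrow> real" where
  "kphi t x = (if t < x then 2 * x / t - 1 else 0)"

fun lens :: "(nat \<Rightarrow> real) \<Rightarrow> nat \<Rightarrow> real multiset" where
  "lens u 0 = {#1#}"
| "lens u (Suc n) = (let m = Max (set_mset (lens u n)) in
     lens u n - {#m#} + {#m * u (Suc n), m * (1 - u (Suc n))#})"

lemma lens_size: "size (lens u n) = Suc n"
proof (induction n)
  case 0 then show ?case by simp
next
  case (Suc n)
  have ne: "set_mset (lens u n) \<noteq> {}" using Suc by auto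
  then have "Max (set_mset (lens u n)) \<in># lens u n" by (simp add: Max_in)
  then show ?case using Suc by (simp add: Let_def size_Diff_singleton)
qed

lemma lens_ne: "set_mset (lens u n) \<noteq> {}"
  using lens_size[of u n] by auto

lemma lens_Max_in: "Max (set_mset (lens u n)) \<in># lens u n"
  using lens_ne by (simp add: Max_in)

lemma lens_cong: "(\<And>i. i \<in> {1..n} \<Longrightarrow> u i = u' i) \<Longrightarrow> lens u n = lens u' n"
  by (induction n) (auto simp: Let_def)

definition kinv :: "(real \<times> real) set \<Rightarrow> bool" where
  "kinv P \<longleftrightarrow> finite P \<and> P \<noteq> {} \<and> (\<forall>p\<in>P. fst p < snd p) \<and>
     (\<forall>p\<in>P. \<forall>q\<in>P. p \<noteq> q \<longrightarrow> snd p \<le> fst q \<or> snd q \<le> fst p)"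

lemma kp_step:
  assumes inv: "kinv P" and L: "image_mset ivl_len (mset_set P) = L"
    and u: "0 < v" "v < 1"
    and P': "P' = (let p = (SOME p. p \<in> P \<and> (\<forall>q\<in>P. ivl_len q \<le> ivl_len p));
          a = fst p; b = snd p;
          c = a + v * (b - a)
      in (P - {p}) \<union> {(a, c), (c, b)})"
  shows "kinv P' \<and> image_mset ivl_len (mset_set P') =
     (let m = Max (set_mset L) in L - {#m#} + {#m * v, m * (1 - v)#})"
proof -
  have fin: "finite P" and ne: "P \<noteq> {}" and pos: "\<And>p. p \<in> P \<Longrightarrow> fst p < snd p"
    and dis: "\<And>p q. p \<in> P \<Longrightarrow> q \<in> P \<Longrightarrow> p \<noteq> q \<Longrightarrow> snd p \<le> fst q \<or> snd q \<le> fst p"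
    using inv unfolding kinv_def by blast+
  have "\<exists>p. p \<in> P \<and> (\<forall>q\<in>P. ivl_len q \<le> ivl_len p)"
  proof -
    have "Max (ivl_len ` P) \<in> ivl_len ` P" using fin ne by (intro Max_in) auto
    then obtain p where "p \<in> P" "ivl_len p = Max (ivl_len ` P)" by auto
    then show ?thesis using fin by (intro exI[of _ p]) auto
  qed
  define p where "p = (SOME p. p \<in> P \<and> (\<forall>q\<in>P. ivl_len q \<le> ivl_len p))"
  have pP: "p \<in> P" and pmax: "\<forall>q\<in>P. ivl_len q \<le> ivl_len p"
    using someI_ex[OF \<open>\<exists>p. _\<close>] unfolding p_def by blast+
  define a where "a = fst p"
  define b where "b = snd p"
  define c where "c = a + v * (b - a)"
  have ab: "a < b" using pos[OF pP] by (simp add: a_def b_def)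
  have "0 < v * (b - a)" using ab u by simp
  moreover have "v * (b - a) < 1 * (b - a)" using ab u by (intro mult_strict_right_mono) auto
  ultimately have ac: "a < c" "c < b" by (simp_all add: c_def)
  have P'eq: "P' = (P - {p}) \<union> {(a, c), (c, b)}"
    using P' by (simp add: Let_def p_def a_def b_def c_def)
  have p_eq: "p = (a, b)" by (simp add: a_def b_def)
  have n1: "(a, c) \<notin> P - {p}"
  proof
    assume "(a, c) \<in> P - {p}"
    then have "snd (a, c) \<le> fst p \<or> snd p \<le> fst (a, c)" using dis[OF _ pP, of "(a,c)"] by auto
    then show False using ac ab by (auto simp: a_def b_def)
  qed
  have n2: "(c, b) \<notin> P - {p}"
  proof
    assume "(c, b) \<in> P - {p}"
    then have "snd (c, b) \<le> fst p \<or> snd p \<le> fst (c, b)" using dis[OF _ pP, of "(c,b)"] by auto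
    then show False using ac ab by (auto simp: a_def b_def)
  qed
  have n3: "(a, c) \<noteq> (c, b)" using ac by auto
  have "mset_set P' = mset_set (P - {p}) + {#(a, c), (c, b)#}"
    using n1 n2 n3 fin by (simp add: P'eq mset_set_Union)
  also have "mset_set (P - {p}) = mset_set P - {#p#}"
    using fin pP by (simp add: mset_set_Diff)
  finally have ms: "mset_set P' = mset_set P - {#p#} + {#(a, c), (c, b)#}" .
  have mx: "Max (set_mset L) = ivl_len p"
  proof -
    have "set_mset L = ivl_len ` P" using L fin by auto
    then show ?thesis using pmax pP fin by (intro Max_eqI) auto
  qed
  have img: "image_mset ivl_len (mset_set P') = L - {#ivl_len p#} + {#ivl_len p * v, ivl_len p * (1 - v)#}"
    using pP fin L
    by (simp add: ms image_mset_Diff ivl_len_def c_def a_def b_def algebra_simps)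
  have kinv': "kinv P'"
    unfolding kinv_def
  proof (intro conjI ballI impI)
    show "finite P'" using fin by (simp add: P'eq)
    show "P' \<noteq> {}" by (simp add: P'eq)
    fix x assume "x \<in> P'" then show "fst x < snd x" using pos ac by (auto simp: P'eq)
  next
    fix x y assume x: "x \<in> P'" and y: "y \<in> P'" and xy: "x \<noteq> y"
    have side: "snd q \<le> a \<or> b \<le> fst q" if "q \<in> P - {p}" for q
      using dis[of q p] that pP by (auto simp: a_def b_def)
    have xc: "x \<in> P - {p} \<or> x = (a, c) \<or> x = (c, b)" using x by (auto simp: P'eq)
    have yc: "y \<in> P - {p} \<or> y = (a, c) \<or> y = (c, b)" using y by (auto simp: P'eq)
    show "snd x \<le> fst y \<or> snd y \<le> fst x"
    proof (cases "x \<in> P - {p}")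
      case xo: True
      show ?thesis
      proof (cases "y \<in> P - {p}")
        case True then show ?thesis using xo dis[of x y] xy by blast
      next
        case False
        then have "y = (a, c) \<or> y = (c, b)" using yc by blast
        then show ?thesis using side[OF xo] ac by auto
      qed
    next
      case xn: False
      then have xn': "x = (a, c) \<or> x = (c, b)" using xc by blast
      show ?thesis
      proof (cases "y \<in> P - {p}")
        case True then show ?thesis using xn' side[OF True] ac by auto
      next
        case False
        then have "y = (a, c) \<or> y = (c, b)" using yc by blast
        then show ?thesis using xn' xy by auto
      qed
    qed
  qed
  show ?thesis using kinv' img mx by (simp add: Let_def)
qed

lemma kp_lens:
  assumes "\<And>i. i \<in> {1..n} \<Longrightarrow> 0 < u i \<and> u i < 1"
  shows "kinv (kakutani_partition u n) \<and> image_mset ivl_len (mset_set (kakutani_partition u n)) = lens u n"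
  using assms
proof (induction n)
  case 0
  then show ?case by (simp add: kinv_def ivl_len_def)
next
  case (Suc n)
  then have IH: "kinv (kakutani_partition u n) \<and> image_mset ivl_len (mset_set (kakutani_partition u n)) = lens u n"
    by auto
  have "0 < u (Suc n)" "u (Suc n) < 1" using Suc.prems[of "Suc n"] by auto
  from kp_step[OF conjunct1[OF IH] conjunct2[OF IH] this, of "kakutani_partition u (Suc n)"]
  show ?case by (simp add: Let_def)
qed

lemma kmax_lens:
  assumes "\<And>i. i \<in> {1..n} \<Longrightarrow> 0 < u i \<and> u i < 1"
  shows "kakutani_max u n = Max (set_mset (lens u n))"
proof -
  from kp_lens[OF assms] have "kinv (kakutani_partition u n)"
    and e: "image_mset ivl_len (mset_set (kakutani_partition u n)) = lens u n" by auto
  then have "finite (kakutani_partition u n)" by (simp add: kinv_def)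
  then have "set_mset (lens u n) = ivl_len ` kakutani_partition u n" using e[symmetric] by simp
  then show ?thesis by (simp add: kakutani_max_def)
qed




lemma sum_mset_nonneg_img:
  fixes f :: "'b \<Rightarrow> real"
  shows "(\<And>x. f x \<ge> 0) \<Longrightarrow> 0 \<le> sum_mset (image_mset f L)"
  by (induction L) (auto intro: add_nonneg_nonneg)

lemma sum_mset_pos_iff:
  fixes L :: "'b multiset" and f :: "'b \<Rightarrow> real"
  assumes "\<And>x. f x \<ge> 0"
  shows "0 < sum_mset (image_mset f L) \<longleftrightarrow> (\<exists>x\<in>#L. 0 < f x)"
  using assms
proof (induction L)
  case empty then show ?case by simp
next
  case (add x L)
  have "0 \<le> sum_mset (image_mset f L)" using add.prems sum_mset_nonneg_img by blast
  then show ?case using add by (auto intro: add_pos_nonneg add_nonneg_pos)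
qed

lemma Max_gt_iff_ind:
  assumes "set_mset L \<noteq> {}"
  shows "a < Max (set_mset L) \<longleftrightarrow> 0 < sum_mset (image_mset (indicator {a<..} :: real \<Rightarrow> real) L)"
  using assms by (subst sum_mset_pos_iff) (auto simp: Max_gr_iff indicator_def)

lemma lens_sum_Suc:
  fixes g :: "real \<Rightarrow> real"
  shows "sum_mset (image_mset g (lens u (Suc j))) =
     sum_mset (image_mset g (lens u j)) - g (Max (set_mset (lens u j)))
     + g (Max (set_mset (lens u j)) * u (Suc j)) + g (Max (set_mset (lens u j)) * (1 - u (Suc j)))"
proof -
  define A where "A = lens u j"
  define m where "m = Max (set_mset A)"
  have "m \<in># A" using lens_Max_in by (simp add: A_def m_def)
  then have "A = add_mset m (A - {#m#})" by simp
  then have h: "sum_mset (image_mset g A) = g m + sum_mset (image_mset g (A - {#m#}))"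
    by (metis image_mset_add_mset sum_mset.insert)
  have eq: "lens u (Suc j) = add_mset (m * u (Suc j)) (add_mset (m * (1 - u (Suc j))) (A - {#m#}))"
    by (simp add: Let_def A_def m_def)
  have s1: "sum_mset (image_mset g (lens u (Suc j))) = g (m * u (Suc j)) + (g (m * (1 - u (Suc j))) + sum_mset (image_mset g (A - {#m#})))"
    unfolding eq by simp
  show ?thesis using s1 h unfolding A_def m_def by linarith
qed

lemma lens_meas:
  fixes S :: "'s measure" and V :: "nat \<Rightarrow> 's \<Rightarrow> real"
  assumes V: "\<And>i. i \<in> {1..n} \<Longrightarrow> V i \<in> borel_measurable S"
  shows "j \<le> n \<Longrightarrow> (\<forall>g :: real \<Rightarrow> real \<in> borel_measurable borel.
     (\<lambda>s. sum_mset (image_mset g (lens (\<lambda>i. V i s) j))) \<in> borel_measurable S) \<and>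
     (\<lambda>s. Max (set_mset (lens (\<lambda>i. V i s) j))) \<in> borel_measurable S"
proof (induction j)
  case 0
  then show ?case by simp
next
  case (Suc j)
  then have IH1: "\<And>g :: real \<Rightarrow> real. g \<in> borel_measurable borel \<Longrightarrow>
     (\<lambda>s. sum_mset (image_mset g (lens (\<lambda>i. V i s) j))) \<in> borel_measurable S"
    and IH2: "(\<lambda>s. Max (set_mset (lens (\<lambda>i. V i s) j))) \<in> borel_measurable S" by auto
  have VS: "V (Suc j) \<in> borel_measurable S" using V Suc.prems by auto
  have G: "(\<lambda>s. sum_mset (image_mset g (lens (\<lambda>i. V i s) (Suc j)))) \<in> borel_measurable S"
    if g: "g \<in> borel_measurable borel" for g :: "real \<Rightarrow> real"
  proof -
    have "(\<lambda>s. sum_mset (image_mset g (lens (\<lambda>i. V i s) j)) - g (Max (set_mset (lens (\<lambda>i. V i s) j)))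
     + g (Max (set_mset (lens (\<lambda>i. V i s) j)) * V (Suc j) s) + g (Max (set_mset (lens (\<lambda>i. V i s) j)) * (1 - V (Suc j) s)))
      \<in> borel_measurable S"
    proof -
      have h1[measurable]: "(\<lambda>s. sum_mset (image_mset g (lens (\<lambda>i. V i s) j))) \<in> borel_measurable S"
        by (rule IH1[OF g])
      note IH2[measurable] VS[measurable] g[measurable]
      show ?thesis by measurable
    qed
    then show ?thesis by (subst lens_sum_Suc) simp
  qed
  have M: "(\<lambda>s. Max (set_mset (lens (\<lambda>i. V i s) (Suc j)))) \<in> borel_measurable S"
  proof (subst borel_measurable_iff_greater, intro allI)
    fix a :: real
    have "(\<lambda>s. sum_mset (image_mset (indicator {a<..} :: real \<Rightarrow> real) (lens (\<lambda>i. V i s) (Suc j)))) \<in> borel_measurable S"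
      by (rule G) simp
    then have "{s \<in> space S. 0 < sum_mset (image_mset (indicator {a<..} :: real \<Rightarrow> real) (lens (\<lambda>i. V i s) (Suc j)))} \<in> sets S"
      by measurable
    also have "{s \<in> space S. 0 < sum_mset (image_mset (indicator {a<..} :: real \<Rightarrow> real) (lens (\<lambda>i. V i s) (Suc j)))}
       = {s \<in> space S. a < Max (set_mset (lens (\<lambda>i. V i s) (Suc j)))}"
      using Max_gt_iff_ind[OF lens_ne] by blast
    finally show "{s \<in> space S. a < Max (set_mset (lens (\<lambda>i. V i s) (Suc j)))} \<in> sets S" .
  qed
  show ?case using G M by blast
qed




lemma exp_le_quad:
  fixes y :: real
  assumes "\<bar>y\<bar> \<le> 1"
  shows "exp y \<le> 1 + y + y\<^sup>2"
proof (cases "0 \<le> y")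
  case True then show ?thesis using exp_bound[of y] assms by auto
next
  case False
  then have y: "y < 0" by simp
  have "1 - y \<le> exp (- y)" using exp_ge_add_one_self[of "-y"] by simp
  then have "exp y \<le> 1 / (1 - y)" using y by (simp add: exp_minus field_simps)
  also have "1 / (1 - y) \<le> 1 + y + y\<^sup>2"
  proof -
    have "1 \<le> (1 - y) * (1 + y + y\<^sup>2)"
    proof -
      have "(1 - y) * (1 + y + y\<^sup>2) = 1 - y^3" by (simp add: algebra_simps power2_eq_square power3_eq_cube)
      moreover have "y^3 \<le> 0"
      proof -
        have "0 < (-y) * (-y) * (-y)" using y by (intro mult_pos_pos) auto
        then show ?thesis by (simp add: power3_eq_cube)
      qed
      ultimately show ?thesis by simp
    qed
    then show ?thesis using y by (simp add: field_simps)
  qed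
  finally show ?thesis .
qed

lemma lin_aux: "(A::real) \<le> x - 1 + 1/2*(p+q) \<Longrightarrow> B \<le> y - 1 + 1/2*(r+s) \<Longrightarrow> x + y = z \<Longrightarrow> C = z - 1
   \<Longrightarrow> A + B - C \<le> -1 + 1/2*(p+q+r+s)" by (simp add: field_simps)

lemma kphi_bounds:
  assumes t: "0 < t" and x: "0 \<le> x"
  shows "2 * x / t - 2 \<le> kphi t x" "kphi t x \<le> 2 * x / t"
    "kphi t x \<le> 2 * x / t - 1 + (1/2) * (indicator {..t/4} x + indicator {..t/2} x)"
proof -
  show "2 * x / t - 2 \<le> kphi t x"
    using t x by (auto simp: kphi_def field_simps)
  show "kphi t x \<le> 2 * x / t"
    using t x by (auto simp: kphi_def field_simps)
  show "kphi t x \<le> 2 * x / t - 1 + (1/2) * (indicator {..t/4} x + indicator {..t/2} x)"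
    using t x by (auto simp: kphi_def field_simps indicator_def)
qed

definition kbeta :: real where "kbeta = 1/72"
definition ktheta :: real where "ktheta = 1/576"

definition kdelta :: "real \<Rightarrow> real \<Rightarrow> real \<Rightarrow> real" where
  "kdelta t m v = kphi t (m * v) + kphi t (m * (1 - v)) - kphi t m"

lemma kdelta_pw:
  assumes t: "0 < t" and m: "t < m" and v: "0 \<le> v" "v \<le> 1"
  shows "exp (kbeta * kdelta t m v) \<le> (1 - kbeta + 9 * kbeta\<^sup>2) + (kbeta / 2) *
     (indicator {..t/(4*m)} v + indicator {..t/(2*m)} v + indicator {1 - t/(4*m)..} v + indicator {1 - t/(2*m)..} v)"
proof -
  have m0: "0 < m" using t m by simp
  have x1: "0 \<le> m * v" "0 \<le> m * (1 - v)" using m0 v by auto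
  have phim: "kphi t m = 2 * m / t - 1" using m by (simp add: kphi_def)
  note b1 = kphi_bounds[OF t x1(1)] and b2 = kphi_bounds[OF t x1(2)]
  have sum2: "2 * (m * v) / t + 2 * (m * (1 - v)) / t = 2 * m / t"
    using t by (simp add: field_simps)
  have dlo: "-3 \<le> kdelta t m v" and dhi: "kdelta t m v \<le> 1"
    using b1(1,2) b2(1,2) sum2 phim unfolding kdelta_def by linarith+
  have i1: "indicator {..t/4} (m * v) = (indicator {..t/(4*m)} v :: real)"
    using m0 by (simp add: indicator_def field_simps)
  have i2: "indicator {..t/2} (m * v) = (indicator {..t/(2*m)} v :: real)"
    using m0 by (simp add: indicator_def field_simps)
  have i3: "indicator {..t/4} (m * (1 - v)) = (indicator {1 - t/(4*m)..} v :: real)"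
    using m0 by (simp add: indicator_def field_simps)
  have i4: "indicator {..t/2} (m * (1 - v)) = (indicator {1 - t/(2*m)..} v :: real)"
    using m0 by (simp add: indicator_def field_simps)
  define D where "D = (indicator {..t/(4*m)} v + indicator {..t/(2*m)} v + indicator {1 - t/(4*m)..} v + indicator {1 - t/(2*m)..} v :: real)"
  have dD: "kdelta t m v \<le> -1 + (1/2) * D"
    unfolding kdelta_def D_def using lin_aux[OF b1(3)[unfolded i1 i2] b2(3)[unfolded i3 i4] sum2 phim] .
  define y where "y = kbeta * kdelta t m v"
  have ay: "\<bar>y\<bar> \<le> 3 * kbeta" using dlo dhi by (auto simp: y_def kbeta_def abs_if)
  have "exp y \<le> 1 + y + y\<^sup>2" using ay by (intro exp_le_quad) (simp add: kbeta_def)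
  also have "y\<^sup>2 \<le> (3 * kbeta)\<^sup>2" using ay by (metis abs_ge_zero power2_abs power_mono)
  also have "y \<le> kbeta * (-1 + (1/2) * D)" unfolding y_def using dD by (simp add: kbeta_def)
  finally have "exp y \<le> 1 + kbeta * (-1 + (1/2) * D) + (3 * kbeta)\<^sup>2" by simp
  then show ?thesis by (simp add: y_def D_def algebra_simps power2_eq_square)
qed

abbreviation unif :: "real measure" where "unif \<equiv> uniform_measure lborel {0..1}"

lemma unif_prob: "prob_space unif"
  by (rule prob_space_uniform_measure) auto

lemma unif_le: "0 \<le> x \<Longrightarrow> x \<le> 1 \<Longrightarrow> measure unif {..x} = x"
proof -
  assume x: "0 \<le> x" "x \<le> 1"
  have "{0..1} \<inter> {..x} = {0..x}" using x by auto
  then show ?thesis using x by (subst measure_uniform_measure) auto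
qed

lemma unif_ge: "0 \<le> x \<Longrightarrow> x \<le> 1 \<Longrightarrow> measure unif {x..} = 1 - x"
proof -
  assume x: "0 \<le> x" "x \<le> 1"
  have "{0..1} \<inter> {x..} = {x..1}" using x by auto
  then show ?thesis using x by (subst measure_uniform_measure) auto
qed

lemma kdelta_meas[measurable]: "(\<lambda>(m, v). kdelta t m v) \<in> borel_measurable (borel \<Otimes>\<^sub>M borel)"
  unfolding kdelta_def kphi_def by measurable

lemma kdelta_int:
  assumes t: "0 < t" and m: "t < m"
  shows "(\<integral>\<^sup>+ v. ennreal (exp (kbeta * kdelta t m v)) \<partial>unif) \<le> ennreal (exp (- ktheta))"
proof -
  interpret U: prob_space unif by (rule unif_prob)
  have m0: "0 < m" using t m by simp
  have a: "0 \<le> t/(4*m)" "t/(4*m) \<le> 1" "0 \<le> t/(2*m)" "t/(2*m) \<le> 1"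
    using t m by (auto simp: field_simps)
  define F where "F = (\<lambda>v. (1 - kbeta + 9 * kbeta\<^sup>2) + (kbeta / 2) *
     (indicator {..t/(4*m)} v + indicator {..t/(2*m)} v + indicator {1 - t/(4*m)..} v + indicator {1 - t/(2*m)..} v :: real))"
  have fin: "emeasure unif A < \<infinity>" for A by (rule le_less_trans[OF U.emeasure_le_1]) simp
  have ii: "integrable unif (indicator A :: real \<Rightarrow> real)" if "A \<in> sets borel" for A
  proof (rule integrable_real_indicator)
    show "A \<in> sets unif" using that by simp
    show "emeasure unif A < \<infinity>" by (rule fin)
  qed
  have i1: "integrable unif (\<lambda>v. (1 - kbeta + 9 * kbeta\<^sup>2 :: real))" by (rule U.integrable_const)
  note ii4 = ii[of "{..t/(4*m)}"] ii[of "{..t/(2*m)}"] ii[of "{1 - t/(4*m)..}"] ii[of "{1 - t/(2*m)..}"]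
  have sp: "A \<inter> space unif = A" for A by simp
  have pu: "measure unif UNIV = 1" using U.prob_space by simp
  have ae: "AE v in unif. v \<in> {0..1}"
    by (rule AE_uniform_measureI) auto
  have "(\<integral>\<^sup>+ v. ennreal (exp (kbeta * kdelta t m v)) \<partial>unif) \<le> (\<integral>\<^sup>+ v. ennreal (F v) \<partial>unif)"
  proof (rule nn_integral_mono_AE)
    have pw: "ennreal (exp (kbeta * kdelta t m v)) \<le> ennreal (F v)" if "v \<in> {0..1}" for v
      unfolding F_def using that by (intro ennreal_leI kdelta_pw[OF t m]) auto
    show "AE v in unif. ennreal (exp (kbeta * kdelta t m v)) \<le> ennreal (F v)"
      using ae by eventually_elim (rule pw)
  qed
  also have "\<dots> = ennreal (integral\<^sup>L unif F)"
  proof (intro nn_integral_eq_integral)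
    show "integrable unif F" unfolding F_def
      using i1 ii4
      by (intro Bochner_Integration.integrable_add Bochner_Integration.integrable_mult_right) auto
    show "AE x in unif. 0 \<le> F x" by (auto simp: F_def kbeta_def)
  qed
  also have "integral\<^sup>L unif F = (1 - kbeta + 9 * kbeta\<^sup>2) + (kbeta / 2) *
     (measure unif {..t/(4*m)} + measure unif {..t/(2*m)} + measure unif {1 - t/(4*m)..} + measure unif {1 - t/(2*m)..})"
    unfolding F_def using i1 ii4
    by (subst Bochner_Integration.integral_add Bochner_Integration.integral_mult_right_zero; simp del: measure_uniform_measure add: sp pu)+
  also have "\<dots> = (1 - kbeta + 9 * kbeta\<^sup>2) + (kbeta / 2) * (3 * (t / m) / 2)"
    using a by (simp add: unif_le unif_ge field_simps)
  also have "\<dots> \<le> 1 - ktheta"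
  proof -
    have "t / m \<le> 1" using t m by simp
    then show ?thesis by (simp add: kbeta_def ktheta_def power2_eq_square)
  qed
  also have "1 - ktheta \<le> exp (- ktheta)" using exp_ge_add_one_self[of "- ktheta"] by simp
  finally show ?thesis by (simp add: ennreal_leI)
qed




definition kPhi :: "real \<Rightarrow> (nat \<Rightarrow> real) \<Rightarrow> nat \<Rightarrow> real" where
  "kPhi t u n = sum_mset (image_mset (kphi t) (lens u n))"

definition kGood :: "real \<Rightarrow> (nat \<Rightarrow> real) \<Rightarrow> nat \<Rightarrow> bool" where
  "kGood t u n \<longleftrightarrow> (\<forall>j. j \<le> n \<longrightarrow> t < Max (set_mset (lens u j)))"

definition kF :: "real \<Rightarrow> nat \<Rightarrow> (nat \<Rightarrow> real) \<Rightarrow> real" where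
  "kF t n u = exp (kbeta * kPhi t u n + ktheta * real n) * (if kGood t u n then 1 else 0)"

lemma kF_cong:
  assumes "\<And>i. i \<in> {1..n} \<Longrightarrow> u i = u' i"
  shows "kF t n u = kF t n u'"
proof -
  have "lens u j = lens u' j" if "j \<le> n" for j
    using assms that by (intro lens_cong) auto
  then have "kPhi t u n = kPhi t u' n" "kGood t u n = kGood t u' n"
    by (auto simp: kPhi_def kGood_def)
  then show ?thesis by (simp add: kF_def)
qed

lemma kphi_meas[measurable]: "kphi t \<in> borel_measurable borel"
  unfolding kphi_def by measurable

lemma lens_meas_all:
  fixes S :: "'s measure" and V :: "nat \<Rightarrow> 's \<Rightarrow> real"
  assumes V: "\<And>i. 1 \<le> i \<Longrightarrow> V i \<in> borel_measurable S"
  shows "(\<lambda>s. kPhi t (\<lambda>i. V i s) j) \<in> borel_measurable S"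
    and "(\<lambda>s. Max (set_mset (lens (\<lambda>i. V i s) j))) \<in> borel_measurable S"
proof -
  have V': "\<And>i. i \<in> {1..j} \<Longrightarrow> V i \<in> borel_measurable S" using V by auto
  from lens_meas[OF V', of j] show "(\<lambda>s. kPhi t (\<lambda>i. V i s) j) \<in> borel_measurable S"
    "(\<lambda>s. Max (set_mset (lens (\<lambda>i. V i s) j))) \<in> borel_measurable S"
    unfolding kPhi_def by auto
qed

lemma kF_meas:
  fixes S :: "'s measure" and V :: "nat \<Rightarrow> 's \<Rightarrow> real"
  assumes V: "\<And>i. 1 \<le> i \<Longrightarrow> V i \<in> borel_measurable S"
  shows "(\<lambda>s. kF t n (\<lambda>i. V i s)) \<in> borel_measurable S"
    and "Measurable.pred S (\<lambda>s. kGood t (\<lambda>i. V i s) n)"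
proof -
  note m1[measurable] = lens_meas_all(1)[OF V]
  note m2[measurable] = lens_meas_all(2)[OF V]
  show p: "Measurable.pred S (\<lambda>s. kGood t (\<lambda>i. V i s) n)"
    unfolding kGood_def by measurable
  show "(\<lambda>s. kF t n (\<lambda>i. V i s)) \<in> borel_measurable S"
    unfolding kF_def using p by measurable
qed

lemma comp_meas_Pi: "(\<lambda>w. w i) \<in> borel_measurable (PiM I (\<lambda>_. borel :: real measure))"
proof (cases "i \<in> I")
  case True then show ?thesis by (rule measurable_component_singleton)
next
  case False
  have "(\<lambda>w. undefined :: real) \<in> borel_measurable (PiM I (\<lambda>_. borel :: real measure))" by simp
  moreover have "\<And>w. w \<in> space (PiM I (\<lambda>_. borel :: real measure)) \<Longrightarrow> undefined = w i"
    using False by (auto simp: space_PiM PiE_def extensional_def)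
  ultimately show ?thesis by (rule measurable_cong[THEN iffD1, rotated])
qed

lemma kH_int:
  assumes t: "0 < t"
  shows "(\<integral>\<^sup>+ v. ennreal (f * exp (ktheta + kbeta * kdelta t m v) * indicator {t<..} m) \<partial>unif) \<le> ennreal f"
proof (cases "0 < f \<and> t < m")
  case False
  have le: "f * exp (ktheta + kbeta * kdelta t m v) * indicator {t<..} m \<le> 0" for v
    using False by (auto simp: indicator_def mult_nonpos_nonneg)
  have "(\<integral>\<^sup>+ v. ennreal (f * exp (ktheta + kbeta * kdelta t m v) * indicator {t<..} m) \<partial>unif) = (\<integral>\<^sup>+ v. 0 \<partial>unif)"
    by (intro nn_integral_cong) (simp add: le ennreal_eq_0_iff)
  then show ?thesis by simp
next
  case True
  then have f: "0 < f" and m: "t < m" by auto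
  have "(\<integral>\<^sup>+ v. ennreal (f * exp (ktheta + kbeta * kdelta t m v) * indicator {t<..} m) \<partial>unif)
      = (\<integral>\<^sup>+ v. ennreal (f * exp ktheta) * ennreal (exp (kbeta * kdelta t m v)) \<partial>unif)"
    using m f by (intro nn_integral_cong) (simp add: exp_add ennreal_mult[symmetric] mult.assoc)
  also have "\<dots> = ennreal (f * exp ktheta) * (\<integral>\<^sup>+ v. ennreal (exp (kbeta * kdelta t m v)) \<partial>unif)"
    by (rule nn_integral_cmult) (simp add: kdelta_def kphi_def)
  also have "\<dots> \<le> ennreal (f * exp ktheta) * ennreal (exp (- ktheta))"
    by (intro mult_left_mono kdelta_int[OF t m]) simp
  also have "\<dots> = ennreal f"
    using f by (simp add: ennreal_mult[symmetric] exp_minus field_simps)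
  finally show ?thesis .
qed




locale kak = prob_space M for M :: "'a measure" +
  fixes U :: "nat \<Rightarrow> 'a \<Rightarrow> real"
  assumes ind: "indep_vars (\<lambda>_. borel) U {1..}"
    and dist: "\<And>i. i \<ge> 1 \<Longrightarrow> distr M borel (U i) = unif"
begin

lemma U_meas: "1 \<le> i \<Longrightarrow> U i \<in> borel_measurable M"
  using ind by (auto simp: indep_vars_def)

lemma G_step:
  assumes t: "0 < t"
  shows "(\<integral>\<^sup>+\<omega>. ennreal (kF t (Suc n) (\<lambda>i. U i \<omega>)) \<partial>M) \<le> (\<integral>\<^sup>+\<omega>. ennreal (kF t n (\<lambda>i. U i \<omega>)) \<partial>M)"
proof -
  define Y where "Y = (\<lambda>\<omega>. restrict (\<lambda>i. U i \<omega>) {1..n})"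
  define Z where "Z = (\<lambda>\<omega>. restrict (\<lambda>i. U i \<omega>) {Suc n})"
  have indYZ: "indep_var (PiM {1..n} (\<lambda>_. borel)) Y (PiM {Suc n} (\<lambda>_. borel)) Z"
    unfolding Y_def Z_def by (rule indep_var_restrict[OF ind]) auto
  define X1f where "X1f = (\<lambda>w. (kF t n w, Max (set_mset (lens w n))))"
  have X1f_meas: "X1f \<in> measurable (PiM {1..n} (\<lambda>_. borel)) (borel \<Otimes>\<^sub>M borel)"
  proof -
    have c: "\<And>i. 1 \<le> i \<Longrightarrow> (\<lambda>w. w i) \<in> borel_measurable (PiM {1..n} (\<lambda>_. borel :: real measure))"
      by (rule comp_meas_Pi)
    note a[measurable] = kF_meas(1)[OF c, where t=t and n=n] lens_meas_all(2)[OF c, where j=n]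
    show ?thesis unfolding X1f_def by measurable
  qed
  have Xeq: "X1f (Y \<omega>) = (kF t n (\<lambda>i. U i \<omega>), Max (set_mset (lens (\<lambda>i. U i \<omega>) n)))" for \<omega>
  proof -
    have "kF t n (Y \<omega>) = kF t n (\<lambda>i. U i \<omega>)" by (rule kF_cong) (simp add: Y_def)
    moreover have "lens (Y \<omega>) n = lens (\<lambda>i. U i \<omega>) n" by (rule lens_cong) (simp add: Y_def)
    ultimately show ?thesis by (simp add: X1f_def)
  qed
  have Zeq: "Z \<omega> (Suc n) = U (Suc n) \<omega>" for \<omega> by (simp add: Z_def)
  from indYZ[unfolded indep_var_distribution_eq]
  have rvY: "Y \<in> measurable M (PiM {1..n} (\<lambda>_. borel))" and rvZ: "Z \<in> measurable M (PiM {Suc n} (\<lambda>_. borel))"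
    and peq: "distr M (PiM {1..n} (\<lambda>_. borel)) Y \<Otimes>\<^sub>M distr M (PiM {Suc n} (\<lambda>_. borel)) Z =
       distr M (PiM {1..n} (\<lambda>_. borel) \<Otimes>\<^sub>M PiM {Suc n} (\<lambda>_. borel)) (\<lambda>x. (Y x, Z x))" by auto
  have rvU: "U (Suc n) \<in> borel_measurable M" by (rule U_meas) simp
  have du: "distr M borel (U (Suc n)) = unif" by (rule dist) simp
  define H where "H = (\<lambda>(p::real \<times> real, v::real). ennreal (fst p * exp (ktheta + kbeta * kdelta t (snd p) v) * indicator {t<..} (snd p)))"
  have H_meas[measurable]: "H \<in> borel_measurable ((borel \<Otimes>\<^sub>M borel) \<Otimes>\<^sub>M borel)"
    unfolding H_def kdelta_def kphi_def by measurable
  define H' where "H' = (\<lambda>(w::nat \<Rightarrow> real, z::nat \<Rightarrow> real). H (X1f w, z (Suc n)))"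
  have H'_meas: "H' \<in> borel_measurable (PiM {1..n} (\<lambda>_. borel) \<Otimes>\<^sub>M PiM {Suc n} (\<lambda>_. borel))"
  proof -
    note X1f_meas[measurable]
    have [measurable]: "(\<lambda>z::nat \<Rightarrow> real. z (Suc n)) \<in> borel_measurable (PiM {Suc n} (\<lambda>_. borel))"
      by (rule measurable_component_singleton) simp
    show ?thesis unfolding H'_def by measurable
  qed
  have pw: "ennreal (kF t (Suc n) (\<lambda>i. U i \<omega>)) \<le> H' (Y \<omega>, Z \<omega>)" for \<omega>
  proof (cases "kGood t (\<lambda>i. U i \<omega>) (Suc n)")
    case False then show ?thesis by (simp add: kF_def)
  next
    case True
    define u where "u = (\<lambda>i. U i \<omega>)"
    define m where "m = Max (set_mset (lens u n))"
    have g: "kGood t u n" using True by (simp add: kGood_def u_def)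
    have mt: "t < m" using g by (simp add: kGood_def m_def)
    have phi: "kPhi t u (Suc n) = kPhi t u n + kdelta t m (u (Suc n))"
      unfolding kPhi_def kdelta_def m_def by (subst lens_sum_Suc) simp
    have "kF t (Suc n) u = kF t n u * exp (ktheta + kbeta * kdelta t m (u (Suc n))) * indicator {t<..} m"
    proof -
      have T': "kGood t u (Suc n)" using True by (simp add: u_def)
      show ?thesis using T' g mt by (simp add: kF_def phi algebra_simps exp_add[symmetric])
    qed
    then show ?thesis by (simp add: H'_def H_def Xeq Zeq u_def m_def)
  qed
  interpret DY: prob_space "distr M (PiM {1..n} (\<lambda>_. borel)) Y" by (rule prob_space_distr[OF rvY])
  interpret DZ: prob_space "distr M (PiM {Suc n} (\<lambda>_. borel)) Z" by (rule prob_space_distr[OF rvZ])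
  have inner: "(\<integral>\<^sup>+ z. H' (w, z) \<partial>distr M (PiM {Suc n} (\<lambda>_. borel)) Z) \<le> ennreal (kF t n w)" for w
  proof -
    have cs: "X1f w \<in> space (borel \<Otimes>\<^sub>M borel)" by (simp add: space_pair_measure)
    have Hv: "(\<lambda>v. H (X1f w, v)) \<in> borel_measurable borel" using H_meas cs by (rule measurable_Pair2)
    have "(\<integral>\<^sup>+ z. H' (w, z) \<partial>distr M (PiM {Suc n} (\<lambda>_. borel)) Z) = (\<integral>\<^sup>+ \<omega>. H' (w, Z \<omega>) \<partial>M)"
    proof -
      have comp: "(\<lambda>z::nat \<Rightarrow> real. z (Suc n)) \<in> borel_measurable (PiM {Suc n} (\<lambda>_. borel))"
        by (rule measurable_component_singleton) simp
      from measurable_compose[OF comp Hv]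
      have "(\<lambda>z::nat \<Rightarrow> real. H (X1f w, z (Suc n))) \<in> borel_measurable (PiM {Suc n} (\<lambda>_. borel))" .
      then have "(\<lambda>z. H' (w, z)) \<in> borel_measurable (PiM {Suc n} (\<lambda>_. borel))" by (simp add: H'_def)
      then show ?thesis using rvZ by (subst nn_integral_distr) auto
    qed
    also have "\<dots> = (\<integral>\<^sup>+ \<omega>. H (X1f w, U (Suc n) \<omega>) \<partial>M)"
      by (simp add: H'_def Zeq)
    also have "\<dots> = (\<integral>\<^sup>+ v. H (X1f w, v) \<partial>distr M borel (U (Suc n)))"
      using rvU Hv by (subst nn_integral_distr) auto
    also have "\<dots> \<le> ennreal (kF t n w)"
      unfolding du by (simp add: H_def X1f_def kH_int[OF t])
    finally show ?thesis .
  qed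
  have "(\<integral>\<^sup>+\<omega>. ennreal (kF t (Suc n) (\<lambda>i. U i \<omega>)) \<partial>M) \<le> (\<integral>\<^sup>+\<omega>. H' (Y \<omega>, Z \<omega>) \<partial>M)"
    by (intro nn_integral_mono pw)
  also have "\<dots> = (\<integral>\<^sup>+ q. H' q \<partial>distr M (PiM {1..n} (\<lambda>_. borel) \<Otimes>\<^sub>M PiM {Suc n} (\<lambda>_. borel)) (\<lambda>x. (Y x, Z x)))"
    using rvY rvZ H'_meas by (subst nn_integral_distr) auto
  also have "\<dots> = (\<integral>\<^sup>+ q. H' q \<partial>(distr M (PiM {1..n} (\<lambda>_. borel)) Y \<Otimes>\<^sub>M distr M (PiM {Suc n} (\<lambda>_. borel)) Z))"
    unfolding peq ..
  also have "\<dots> = (\<integral>\<^sup>+ w. \<integral>\<^sup>+ z. H' (w, z) \<partial>distr M (PiM {Suc n} (\<lambda>_. borel)) Z \<partial>distr M (PiM {1..n} (\<lambda>_. borel)) Y)"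
    using H'_meas by (subst DZ.nn_integral_fst[symmetric]) auto
  also have "\<dots> \<le> (\<integral>\<^sup>+ w. ennreal (kF t n w) \<partial>distr M (PiM {1..n} (\<lambda>_. borel)) Y)"
    by (intro nn_integral_mono inner)
  also have "\<dots> = (\<integral>\<^sup>+\<omega>. ennreal (kF t n (Y \<omega>)) \<partial>M)"
  proof -
    have c: "\<And>i. 1 \<le> i \<Longrightarrow> (\<lambda>w. w i) \<in> borel_measurable (PiM {1..n} (\<lambda>_. borel :: real measure))"
      by (rule comp_meas_Pi)
    note a = kF_meas(1)[OF c, where t=t and n=n]
    have kFm: "(\<lambda>w. ennreal (kF t n w)) \<in> borel_measurable (PiM {1..n} (\<lambda>_. borel :: real measure))"
      by (rule measurable_compose[OF a]) measurable
    show ?thesis using rvY kFm by (subst nn_integral_distr) auto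
  qed
  also have "\<dots> = (\<integral>\<^sup>+\<omega>. ennreal (kF t n (\<lambda>i. U i \<omega>)) \<partial>M)"
    using Xeq by (simp add: X1f_def)
  finally show ?thesis .
qed

end




lemma summable_poly_exp:
  assumes c: "0 < c"
  shows "summable (\<lambda>n. real (Suc n) ^ k * exp (- c * real n))"
proof (rule summable_ratio_test[where c="exp (- c / 2)" and N="nat \<lceil>2 * k / c\<rceil>"])
  show "exp (- c / 2) < 1" using c by simp
next
  fix n assume n: "nat \<lceil>2 * k / c\<rceil> \<le> n"
  have n1: "0 < real (Suc n)" by simp
  have "real (Suc (Suc n)) = real (Suc n) * (1 + 1 / real (Suc n))" by (simp add: field_simps)
  also have "\<dots> \<le> real (Suc n) * exp (1 / real (Suc n))"
    using exp_ge_add_one_self[of "1 / real (Suc n)"] by (intro mult_left_mono) auto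
  finally have a: "real (Suc (Suc n)) \<le> real (Suc n) * exp (1 / real (Suc n))" .
  have "real (Suc (Suc n)) ^ k \<le> (real (Suc n) * exp (1 / real (Suc n))) ^ k"
    using a by (intro power_mono) auto
  also have "\<dots> = real (Suc n) ^ k * exp (real k / real (Suc n))"
    by (simp add: power_mult_distrib exp_of_nat_mult[symmetric])
  also have "exp (real k / real (Suc n)) \<le> exp (c / 2)"
  proof -
    have "2 * k / c \<le> real n" using n by linarith
    then have "2 * k \<le> c * real n" using c by (simp add: field_simps)
    then have "real k / real (Suc n) \<le> c / 2" using c by (simp add: field_simps)
    then show ?thesis by simp
  qed
  finally have b: "real (Suc (Suc n)) ^ k \<le> real (Suc n) ^ k * exp (c / 2)"
    by (simp add: mult_left_mono)
  have "real (Suc (Suc n)) ^ k * exp (- c * real (Suc n)) \<le> real (Suc n) ^ k * exp (c / 2) * exp (- c * real (Suc n))"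
    using b by (intro mult_right_mono) auto
  also have "\<dots> = exp (- c / 2) * (real (Suc n) ^ k * exp (- c * real n))"
    by (simp add: mult_ac exp_add[symmetric] algebra_simps)
  finally show "norm (real (Suc (Suc n)) ^ k * exp (- c * real (Suc n))) \<le> exp (- c / 2) * norm (real (Suc n) ^ k * exp (- c * real n))"
    by simp
qed

lemma kphi_nonneg: "0 < t \<Longrightarrow> 0 \<le> kphi t x"
  by (auto simp: kphi_def field_simps)

lemma kPhi_nonneg: "0 < t \<Longrightarrow> 0 \<le> kPhi t u n"
  unfolding kPhi_def by (rule sum_mset_nonneg_img) (rule kphi_nonneg)

lemma ennreal_all_nat_top: "(\<And>K::nat. of_nat K \<le> (x::ennreal)) \<Longrightarrow> x = top"
  using ennreal_Ex_less_of_nat by (metis leD top.not_eq_extremum)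

context kak
begin

lemma G_bound:
  assumes t: "0 < t"
  shows "(\<integral>\<^sup>+\<omega>. ennreal (kF t n (\<lambda>i. U i \<omega>)) \<partial>M) \<le> ennreal (exp (2 * kbeta / t))"
proof (induction n)
  case 0
  have "kF t 0 u \<le> exp (2 * kbeta / t)" for u
  proof -
    have "kphi t 1 \<le> 2 / t" using t by (auto simp: kphi_def)
    then have "exp (kbeta * kphi t 1) \<le> exp (2 * kbeta / t)" by (simp add: kbeta_def)
    then show ?thesis by (simp add: kF_def kPhi_def)
  qed
  then have "(\<integral>\<^sup>+\<omega>. ennreal (kF t 0 (\<lambda>i. U i \<omega>)) \<partial>M) \<le> (\<integral>\<^sup>+\<omega>. ennreal (exp (2 * kbeta / t)) \<partial>M)"
    by (intro nn_integral_mono ennreal_leI) auto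
  also have "\<dots> = ennreal (exp (2 * kbeta / t))" by (simp add: emeasure_space_1)
  finally show ?case .
next
  case (Suc n)
  then show ?case using G_step[OF t, of n] by simp
qed

lemma good_meas: "Measurable.pred M (\<lambda>\<omega>. kGood t (\<lambda>i. U i \<omega>) n)"
  by (rule kF_meas(2)) (rule U_meas)

lemma tail_bound:
  assumes t: "0 < t"
  shows "(\<integral>\<^sup>+\<omega>. (if kGood t (\<lambda>i. U i \<omega>) n then 1 else 0) \<partial>M) \<le> ennreal (exp (2 * kbeta / t - ktheta * n))"
proof -
  have pw: "(if kGood t (\<lambda>i. U i \<omega>) n then 1 else 0) \<le> ennreal (exp (- ktheta * n)) * ennreal (kF t n (\<lambda>i. U i \<omega>))" for \<omega>
  proof (cases "kGood t (\<lambda>i. U i \<omega>) n")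
    case True
    have "1 \<le> exp (- ktheta * n) * kF t n (\<lambda>i. U i \<omega>)"
      using True kPhi_nonneg[OF t, of "\<lambda>i. U i \<omega>" n]
      by (simp add: kF_def exp_add[symmetric] kbeta_def)
    then have "ennreal 1 \<le> ennreal (exp (- ktheta * n) * kF t n (\<lambda>i. U i \<omega>))" by (rule ennreal_leI)
    also have "\<dots> = ennreal (exp (- ktheta * n)) * ennreal (kF t n (\<lambda>i. U i \<omega>))"
      by (rule ennreal_mult) (auto simp: kF_def)
    finally show ?thesis using True by simp
  qed simp
  have km: "(\<lambda>\<omega>. ennreal (kF t n (\<lambda>i. U i \<omega>))) \<in> borel_measurable M"
    using kF_meas(1)[where V=U and S=M, OF U_meas] by measurable
  have "(\<integral>\<^sup>+\<omega>. (if kGood t (\<lambda>i. U i \<omega>) n then 1 else 0) \<partial>M) \<le> (\<integral>\<^sup>+\<omega>. ennreal (exp (- ktheta * n)) * ennreal (kF t n (\<lambda>i. U i \<omega>)) \<partial>M)"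
    by (intro nn_integral_mono pw)
  also have "\<dots> = ennreal (exp (- ktheta * n)) * (\<integral>\<^sup>+\<omega>. ennreal (kF t n (\<lambda>i. U i \<omega>)) \<partial>M)"
    using km by (rule nn_integral_cmult)
  also have "\<dots> \<le> ennreal (exp (- ktheta * n)) * ennreal (exp (2 * kbeta / t))"
    by (intro mult_left_mono G_bound[OF t]) simp
  also have "\<dots> = ennreal (exp (2 * kbeta / t - ktheta * n))"
    by (simp add: ennreal_mult[symmetric] exp_add[symmetric])
  finally show ?thesis .
qed

lemma AE_good: "AE \<omega> in M. \<forall>i. 1 \<le> i \<longrightarrow> 0 < U i \<omega> \<and> U i \<omega> < 1"
proof -
  have "AE \<omega> in M. 1 \<le> i \<longrightarrow> 0 < U i \<omega> \<and> U i \<omega> < 1" for i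
  proof (cases "1 \<le> i")
    case True
    have "AE v in unif. 0 < v \<and> v < 1"
    proof (rule AE_uniform_measureI)
      show "{0..1::real} \<in> sets lborel" by simp
      show "AE x in lborel. x \<in> {0..1::real} \<longrightarrow> 0 < x \<and> x < 1"
      proof -
        have a0: "AE x in lborel. (x::real) \<noteq> 0" by (rule AE_lborel_singleton)
        have a1: "AE x in lborel. (x::real) \<noteq> 1" by (rule AE_lborel_singleton)
        have "AE x in lborel. (x::real) \<noteq> 0 \<and> x \<noteq> 1" using a0 a1 by (rule AE_conjI)
        then show ?thesis by eventually_elim auto
      qed
    qed
    then have "AE v in distr M borel (U i). 0 < v \<and> v < 1" unfolding dist[OF True] .
    then have "AE \<omega> in M. 0 < U i \<omega> \<and> U i \<omega> < 1" by (rule AE_distrD[OF U_meas[OF True]])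
    then show ?thesis by simp
  qed simp
  then show ?thesis by (subst AE_all_countable) auto
qed

end




context kak
begin

lemma main:
  shows "\<exists>C\<ge>0. \<forall>t::real. 0 < t \<and> t \<le> 1 \<longrightarrow>
           (\<integral>\<^sup>+ \<omega>. (ennreal_of_enat (kakutani_N (\<lambda>i. U i \<omega>) t)) ^ k \<partial>M) \<le> ennreal (C / t ^ k)"
proof -
  define c where "c = ktheta / 2"
  have c0: "0 < c" by (simp add: c_def ktheta_def)
  define S where "S = (\<Sum>n. real (Suc n) ^ k * exp (- c * real n))"
  have sumS: "summable (\<lambda>n. real (Suc n) ^ k * exp (- c * real n))" by (rule summable_poly_exp[OF c0])
  have S0: "0 \<le> S" unfolding S_def by (rule suminf_nonneg[OF sumS]) simp
  show ?thesis
  proof (intro exI[of _ "33 ^ k + S"] conjI allI impI)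
    show "0 \<le> 33 ^ k + S" using S0 by simp
    fix t :: real assume tt: "0 < t \<and> t \<le> 1"
    then have t: "0 < t" and t1: "t \<le> 1" by auto
    define m0 where "m0 = nat \<lceil>32 / t\<rceil>"
    have ce: "real m0 = of_int \<lceil>32 / t\<rceil>" using t by (simp add: m0_def)
    have m0a: "32 / t \<le> real m0" unfolding ce by (rule le_of_int_ceiling)
    have m0b: "real m0 \<le> 33 / t"
    proof -
      have "real m0 \<le> 32 / t + 1" unfolding ce by (rule of_int_ceiling_le_add_one)
      moreover have "1 \<le> 1 / t" using t t1 by (simp add: field_simps)
      ultimately show ?thesis by (simp add: field_simps)
    qed
    define cc where "cc n = (if m0 \<le> n then real (Suc n) ^ k else 0)" for n
    define gd where "gd n \<omega> = (if kGood t (\<lambda>i. U i \<omega>) n then 1 else 0 :: ennreal)" for n \<omega>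
    have pw: "AE \<omega> in M. (ennreal_of_enat (kakutani_N (\<lambda>i. U i \<omega>) t)) ^ k \<le>
        ennreal (real m0 ^ k) + (\<Sum>n. ennreal (cc n) * gd n \<omega>)"
      using AE_good
    proof eventually_elim
      case (elim \<omega>)
      define u where "u = (\<lambda>i. U i \<omega>)"
      have km: "kakutani_max u j = Max (set_mset (lens u j))" for j
        by (rule kmax_lens) (use elim in \<open>auto simp: u_def\<close>)
      have R1: "ennreal (real m0 ^ k) \<le> ennreal (real m0 ^ k) + (\<Sum>n. ennreal (cc n) * gd n \<omega>)"
        by simp
      have R2: "(\<Sum>n. ennreal (cc n) * gd n \<omega>) \<le> ennreal (real m0 ^ k) + (\<Sum>n. ennreal (cc n) * gd n \<omega>)"
        by simp
      have "(ennreal_of_enat (kakutani_N u t)) ^ k \<le> ennreal (real m0 ^ k) + (\<Sum>n. ennreal (cc n) * gd n \<omega>)"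
      proof (cases "\<exists>j. kakutani_max u j \<le> t")
        case True
        define N0 where "N0 = (LEAST j. kakutani_max u j \<le> t)"
        have N0in: "kakutani_max u N0 \<le> t" using True unfolding N0_def by (rule LeastI_ex)
        have N0min: "\<not> kakutani_max u j \<le> t" if "j < N0" for j
          using not_less_Least[of j "\<lambda>j. kakutani_max u j \<le> t"] that unfolding N0_def by blast
        have Neq: "kakutani_N u t = enat N0"
          unfolding kakutani_N_def
        proof (rule antisym)
          show "(INF n\<in>{n. kakutani_max u n \<le> t}. enat n) \<le> enat N0"
            by (rule INF_lower) (simp add: N0in)
          show "enat N0 \<le> (INF n\<in>{n. kakutani_max u n \<le> t}. enat n)"
            by (rule INF_greatest) (simp add: N0_def Least_le)
        qed
        have lhs: "(ennreal_of_enat (kakutani_N u t)) ^ k = ennreal (real N0 ^ k)"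
          by (simp add: Neq ennreal_of_nat_eq_real_of_nat ennreal_power)
        show ?thesis
        proof (cases "N0 \<le> m0")
          case True
          have "ennreal (real N0 ^ k) \<le> ennreal (real m0 ^ k)" using True by (intro ennreal_leI power_mono) auto
          then have "ennreal (real N0 ^ k) \<le> ennreal (real m0 ^ k) + (\<Sum>n. ennreal (cc n) * gd n \<omega>)"
            using R1 by (rule order_trans)
          then show ?thesis using lhs by simp
        next
          case False
          define n where "n = N0 - 1"
          have nN: "Suc n = N0" "m0 \<le> n" using False by (auto simp: n_def)
          have good: "kGood t u n" unfolding kGood_def
          proof (intro allI impI)
            fix j assume "j \<le> n"
            then have "j < N0" using nN by simp
            then have "\<not> kakutani_max u j \<le> t" by (rule N0min)
            then show "t < Max (set_mset (lens u j))" using km[of j] by simp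
          qed
          have "ennreal (real N0 ^ k) = ennreal (cc n) * gd n \<omega>"
            using good nN by (simp add: cc_def gd_def u_def)
          also have "\<dots> = (\<Sum>j\<in>{n}. ennreal (cc j) * gd j \<omega>)" by simp
          also have "\<dots> \<le> (\<Sum>j. ennreal (cc j) * gd j \<omega>)" by (rule sum_le_suminf) auto
          finally have "ennreal (real N0 ^ k) \<le> (\<Sum>j. ennreal (cc j) * gd j \<omega>)" .
          then have "ennreal (real N0 ^ k) \<le> ennreal (real m0 ^ k) + (\<Sum>n. ennreal (cc n) * gd n \<omega>)"
            using R2 by (rule order_trans)
          then show ?thesis using lhs by simp
        qed
      next
        case False
        then have emp: "{n. kakutani_max u n \<le> t} = {}" by auto
        have Neq: "kakutani_N u t = \<infinity>" by (simp add: kakutani_N_def emp top_enat_def)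
        show ?thesis
        proof (cases "k = 0")
          case True then show ?thesis using R1 by simp
        next
          case k0: False
          have good: "kGood t u n" for n using False km by (auto simp: kGood_def not_le)
          have "(\<Sum>n. ennreal (cc n) * gd n \<omega>) = top"
          proof (rule ennreal_all_nat_top)
            fix K :: nat
            have "of_nat K = (\<Sum>n\<in>{m0..<m0+K}. (1::ennreal))" by simp
            also have "\<dots> \<le> (\<Sum>n\<in>{m0..<m0+K}. ennreal (cc n) * gd n \<omega>)"
            proof (intro sum_mono)
              fix n assume "n \<in> {m0..<m0+K}"
              then have "cc n = real (Suc n) ^ k" by (simp add: cc_def)
              moreover have "1 \<le> real (Suc n) ^ k" by (simp add: one_le_power)
              ultimately have "ennreal 1 \<le> ennreal (cc n)" by (intro ennreal_leI) simp
              then show "1 \<le> ennreal (cc n) * gd n \<omega>" using good[of n] by (simp add: gd_def u_def)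
            qed
            also have "\<dots> \<le> (\<Sum>n. ennreal (cc n) * gd n \<omega>)" by (rule sum_le_suminf) auto
            finally show "of_nat K \<le> (\<Sum>n. ennreal (cc n) * gd n \<omega>)" .
          qed
          then show ?thesis by simp
        qed
      qed
      then show ?case by (simp add: u_def)
    qed
    have gm: "(\<lambda>\<omega>. gd n \<omega>) \<in> borel_measurable M" for n
      using good_meas[of t n] unfolding gd_def by measurable
    have "(\<integral>\<^sup>+ \<omega>. (ennreal_of_enat (kakutani_N (\<lambda>i. U i \<omega>) t)) ^ k \<partial>M) \<le>
        (\<integral>\<^sup>+ \<omega>. ennreal (real m0 ^ k) + (\<Sum>n. ennreal (cc n) * gd n \<omega>) \<partial>M)"
      by (rule nn_integral_mono_AE[OF pw])
    also have "\<dots> = ennreal (real m0 ^ k) + (\<Sum>n. ennreal (cc n) * (\<integral>\<^sup>+ \<omega>. gd n \<omega> \<partial>M))"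
    proof -
      have m1: "(\<lambda>\<omega>. ennreal (cc n) * gd n \<omega>) \<in> borel_measurable M" for n using gm[of n] by measurable
      have "(\<integral>\<^sup>+ \<omega>. ennreal (real m0 ^ k) + (\<Sum>n. ennreal (cc n) * gd n \<omega>) \<partial>M)
          = (\<integral>\<^sup>+ \<omega>. ennreal (real m0 ^ k) \<partial>M) + (\<integral>\<^sup>+ \<omega>. (\<Sum>n. ennreal (cc n) * gd n \<omega>) \<partial>M)"
        using m1 by (intro nn_integral_add) auto
      also have "(\<integral>\<^sup>+ \<omega>. (\<Sum>n. ennreal (cc n) * gd n \<omega>) \<partial>M) = (\<Sum>n. (\<integral>\<^sup>+ \<omega>. ennreal (cc n) * gd n \<omega> \<partial>M))"
        using m1 by (intro nn_integral_suminf) auto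
      also have "(\<lambda>n. (\<integral>\<^sup>+ \<omega>. ennreal (cc n) * gd n \<omega> \<partial>M)) = (\<lambda>n. ennreal (cc n) * (\<integral>\<^sup>+ \<omega>. gd n \<omega> \<partial>M))"
        using gm by (intro ext nn_integral_cmult) auto
      finally show ?thesis by (simp add: emeasure_space_1)
    qed
    also have "\<dots> \<le> ennreal (real m0 ^ k) + (\<Sum>n. ennreal (real (Suc n) ^ k * exp (- c * real n)))"
    proof (intro add_left_mono suminf_le allI)
      fix n
      have "ennreal (cc n) * (\<integral>\<^sup>+ \<omega>. gd n \<omega> \<partial>M) \<le> ennreal (cc n) * ennreal (exp (2 * kbeta / t - ktheta * n))"
        using tail_bound[OF t, of n] unfolding gd_def by (intro mult_left_mono) auto
      also have "\<dots> = ennreal (cc n * exp (2 * kbeta / t - ktheta * n))"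
        by (rule ennreal_mult[symmetric]) (auto simp: cc_def)
      also have "\<dots> \<le> ennreal (real (Suc n) ^ k * exp (- c * real n))"
      proof (rule ennreal_leI, cases "m0 \<le> n")
        case True
        have "32 / t \<le> real n" using m0a True by linarith
        then have "32 \<le> real n * t" using t by (simp add: field_simps)
        then have "2 * kbeta / t - ktheta * n \<le> - c * real n"
          using t by (simp add: kbeta_def ktheta_def c_def field_simps)
        then show "cc n * exp (2 * kbeta / t - ktheta * n) \<le> real (Suc n) ^ k * exp (- c * real n)"
          using True by (simp add: cc_def)
      next
        case False
        then show "cc n * exp (2 * kbeta / t - ktheta * n) \<le> real (Suc n) ^ k * exp (- c * real n)"
          by (simp add: cc_def)
      qed
      finally show "ennreal (cc n) * (\<integral>\<^sup>+ \<omega>. gd n \<omega> \<partial>M) \<le> ennreal (real (Suc n) ^ k * exp (- c * real n))" .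
    qed auto
    also have "\<dots> = ennreal (real m0 ^ k) + ennreal S"
      unfolding S_def by (subst suminf_ennreal2[OF _ sumS]) auto
    also have "\<dots> = ennreal (real m0 ^ k + S)"
      by (rule ennreal_plus[symmetric]) (auto simp: S0)
    also have "\<dots> \<le> ennreal ((33 ^ k + S) / t ^ k)"
    proof (rule ennreal_leI)
      have tk: "0 < t ^ k" "t ^ k \<le> 1" using t t1 by (auto simp: power_le_one)
      have "real m0 ^ k \<le> (33 / t) ^ k" using m0b by (intro power_mono) auto
      also have "\<dots> = 33 ^ k / t ^ k" by (simp add: power_divide)
      finally have a: "real m0 ^ k \<le> 33 ^ k / t ^ k" .
      have b: "S \<le> S / t ^ k" using tk S0 by (simp add: field_simps mult_left_le)
      show "real m0 ^ k + S \<le> (33 ^ k + S) / t ^ k" using a b by (simp add: add_divide_distrib)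
    qed
    finally show "(\<integral>\<^sup>+ \<omega>. (ennreal_of_enat (kakutani_N (\<lambda>i. U i \<omega>) t)) ^ k \<partial>M) \<le> ennreal ((33 ^ k + S) / t ^ k)" .
  qed
qed

end

theorem lemma2p2:
  fixes M :: "'a measure" and U :: "nat \<Rightarrow> 'a \<Rightarrow> real" and k :: nat
  assumes "prob_space M"
    and "prob_space.indep_vars M (\<lambda>_. borel) U {1..}"
    and "\<And>i. i \<ge> 1 \<Longrightarrow> distr M borel (U i) = uniform_measure lborel {0..1}"
  shows "\<exists>C\<ge>0. \<forall>t::real. 0 < t \<and> t \<le> 1 \<longrightarrow>
           (\<integral>\<^sup>+ \<omega>. (ennreal_of_enat (kakutani_N (\<lambda>i. U i \<omega>) t)) ^ k \<partial>M) \<le> ennreal (C / t ^ k)"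
proof -
  interpret kak M U
    by (rule kak.intro[OF assms(1)], unfold_locales) (use assms in auto)
  show ?thesis by (rule main)
qed



end
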